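(* For each $n\ge1$, the map $\eta\circ\iota$ is a bijection between $\mathcal{T}_n$ (the set of triangles, up to similarity, having exact pedal period $n$) and $\mathcal{W}_n$ (the set of primitive two-dimensional words of dimension $2\times n$ over $\{0,1\}$).
   Context: Let $\Sigma=\{0,1\}$, $\Gamma=\{0,1,2,3\}$. A two-dimensional word of dimension $m\times n$ over $\Sigma$ is a map $\{0,\dots,m-1\}\times\{0,\dots,n-1\}\to\Sigma$; $W^{p\times q}$ is the $pm\times qn$ word with $W^{p\times q}[i,j]=W[i\bmod m,j\bmod n]$; $W$ is periodic if $W=V^{p\times q}$ for nonempty $V$ with $p\ge2$ or $q\ge2$, primitive otherwise. $\mathcal{W}_n$ is the set of primitive $2\times n$ words over $\Sigma$. $\eta$ sends $0\mapsto\begin{bmatrix}0\\1\end{bmatrix}$, $1\mapsto\begin{bmatrix}0\\0\end{bmatrix}$, $2\mapsto\begin{bmatrix}1\\1\end{bmatrix}$, $3\mapsto\begin{bmatrix}1\\0\end{bmatrix}$, extended to $w=w_0\cdots w_{n-1}\in\Gamma^n$ by letting the $j$th column of $\eta(w)$ be $\eta(w_j)$. Triangles up to similarity are sorted normalized angle triples in $C=\{(a,b,c)\in\mathbb{R}^3: a\ge b\ge c>0,\ a+b+c=1\}$ (angles $a\pi,b\pi,c\pi$); $C^*=\{(a,b,c)\in C: a\ne1/2\}$. Regions of $C^*$: $R_0=\{a<1/2\}$, $R_1=\{2a-1\ge2b,\ a>1/2\}$, $R_2=\{2b>2a-1\ge2c,\ a>1/2\}$, $R_3=\{2c>2a-1,\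 a>1/2\}$. Sorted pedal map $P:C^*\to C$: $P(a,b,c)=(1-2c,1-2b,1-2a)$ on $R_0$, $(2a-1,2b,2c)$ on $R_1$, $(2b,2a-1,2c)$ on $R_2$, $(2b,2c,2a-1)$ on $R_3$. $\mathcal{T}_n=\{p\in C: P^j(p)\text{ defined for }0\le j<n,\ P^n(p)=p,\ P^d(p)\ne p\text{ for }1\le d<n\}$. The itinerary $\iota(p)=w_0\cdots w_{n-1}\in\Gamma^n$ of $p\in\mathcal{T}_n$ is defined by $P^j(p)\in R_{w_j}$ for $0\le j<n$. *)

theory Defs
  imports Main Complex_Main
begin

type_synonym triple = "real \<times> real \<times> real"

definition Ctri :: "triple set" where
  "Ctri = {(a,b,c). a \<ge> b \<and> b \<ge> c \<and> c > 0 \<and> a + b + c = 1}"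

definition Cstar :: "triple set" where
  "Cstar = {(a,b,c). (a,b,c) \<in> Ctri \<and> a \<noteq> 1/2}"

definition Reg :: "nat \<Rightarrow> triple set" where
  "Reg k = (if k = 0 then {(a,b,c). (a,b,c) \<in> Cstar \<and> a < 1/2}
     else if k = 1 then {(a,b,c). (a,b,c) \<in> Cstar \<and> 2*a - 1 \<ge> 2*b \<and> a > 1/2}
     else if k = 2 then {(a,b,c). (a,b,c) \<in> Cstar \<and> 2*b > 2*a - 1 \<and> 2*a - 1 \<ge> 2*c \<and> a > 1/2}
     else if k = 3 then {(a,b,c). (a,b,c) \<in> Cstar \<and> 2*c > 2*a - 1 \<and> a > 1/2}
     else {})"

definition Ped :: "triple \<Rightarrow> triple" where
  "Ped p = (case p of (a,b,c) \<Rightarrow>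
     if p \<in> Reg 0 then (1 - 2*c, 1 - 2*b, 1 - 2*a)
     else if p \<in> Reg 1 then (2*a - 1, 2*b, 2*c)
     else if p \<in> Reg 2 then (2*b, 2*a - 1, 2*c)
     else if p \<in> Reg 3 then (2*b, 2*c, 2*a - 1)
     else undefined)"

definition Tset :: "nat \<Rightarrow> triple set" where
  "Tset n = {p \<in> Ctri. (\<forall>j<n. (Ped ^^ j) p \<in> Cstar) \<and> (Ped ^^ n) p = p
                \<and> (\<forall>d. 1 \<le> d \<and> d < n \<longrightarrow> (Ped ^^ d) p \<noteq> p)}"

text \<open>Itinerary (word over Gamma = {0,1,2,3}, as a list of naturals).\<close>
definition itin :: "nat \<Rightarrow> triple \<Rightarrow> nat list" where
  "itin n p = map (\<lambda>j. THE k. k < 4 \<and> (Ped ^^ j) p \<in> Reg k) [0..<n]"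

text \<open>A two-dimensional word of dimension m x n over {0,1} is a list of m rows,
  each a list of length n with entries in {0,1}; entry [i,j] is W ! i ! j.\<close>
definition is_word :: "nat \<Rightarrow> nat \<Rightarrow> nat list list \<Rightarrow> bool" where
  "is_word m n W \<longleftrightarrow> length W = m \<and> (\<forall>r\<in>set W. length r = n \<and> set r \<subseteq> {0,1})"

text \<open>V^(p x q): entry [i,j] is V[i mod m, j mod n].\<close>
definition wpow :: "nat list list \<Rightarrow> nat \<Rightarrow> nat \<Rightarrow> nat list list" where
  "wpow V p q = concat (replicate p (map (\<lambda>r. concat (replicate q r)) V))"

definition periodic :: "nat list list \<Rightarrow> bool" where
  "periodic W \<longleftrightarrow> (\<exists>V m n p q. m \<ge> 1 \<and> n \<ge> 1 \<and> is_word m n V \<and> (p \<ge> 2 \<or> q \<ge> 2)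
                      \<and> W = wpow V p q)"

definition primitive :: "nat list list \<Rightarrow> bool" where
  "primitive W \<longleftrightarrow> \<not> periodic W"

definition Wset :: "nat \<Rightarrow> nat list list set" where
  "Wset n = {W. is_word 2 n W \<and> primitive W}"

definition eta_col :: "nat \<Rightarrow> nat list" where
  "eta_col x = (if x = 0 then [0,1] else if x = 1 then [0,0]
                else if x = 2 then [1,1] else [1,0])"

definition eta :: "nat list \<Rightarrow> nat list list" where
  "eta w = [map (\<lambda>x. eta_col x ! 0) w, map (\<lambda>x. eta_col x ! 1) w]"

end

theory Submission
  imports Defs "HOL-Analysis.Analysis"
begin

definition Tm :: "nat \<Rightarrow> triple \<Rightarrow> triple" where
  "Tm k p = (case p of (a,b,c) \<Rightarrow>
     if k = 0 then (1 - 2*c, 1 - 2*b, 1 - 2*a)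
     else if k = 1 then (2*a - 1, 2*b, 2*c)
     else if k = 2 then (2*b, 2*a - 1, 2*c)
     else (2*b, 2*c, 2*a - 1))"

definition Gm :: "nat \<Rightarrow> triple \<Rightarrow> triple" where
  "Gm k p = (case p of (a,b,c) \<Rightarrow>
     if k = 0 then ((1 - c)/2, (1 - b)/2, (1 - a)/2)
     else if k = 1 then ((a + 1)/2, b/2, c/2)
     else if k = 2 then ((b + 1)/2, a/2, c/2)
     else ((c + 1)/2, a/2, b/2))"

lemma Tm_Gm: "Tm k (Gm k p) = p"
  by (cases p) (auto simp: Tm_def Gm_def field_simps)

lemma Reg_sub: "k < 4 \<Longrightarrow> Reg k \<subseteq> Cstar"
  by (auto simp: Reg_def)

lemma Reg_disj: "p \<in> Reg k \<Longrightarrow> p \<in> Reg l \<Longrightarrow> k = l"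
  by (cases p) (auto simp: Reg_def Cstar_def Ctri_def split: if_splits)

lemma Reg_lt4: "p \<in> Reg k \<Longrightarrow> k < 4"
  by (auto simp: Reg_def split: if_splits)

lemma Cstar_Reg: "p \<in> Cstar \<Longrightarrow> \<exists>k<4. p \<in> Reg k"
proof -
  assume "p \<in> Cstar"
  then obtain a b c where p: "p = (a,b,c)" and h: "a \<ge> b" "b \<ge> c" "c > 0" "a+b+c = 1" "a \<noteq> 1/2"
    by (cases p) (auto simp: Cstar_def Ctri_def)
  show ?thesis
  proof (cases "a < 1/2")
    case True then show ?thesis using h p by (intro exI[of _ 0]) (auto simp: Reg_def Cstar_def Ctri_def)
  next
    case False
    then have "a > 1/2" using h by auto
    then show ?thesis using h p
      apply (cases "2*a - 1 \<ge> 2*b")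
       apply (rule exI[of _ 1]; auto simp: Reg_def Cstar_def Ctri_def)
      apply (cases "2*a - 1 \<ge> 2*c")
       apply (rule exI[of _ 2]; auto simp: Reg_def Cstar_def Ctri_def)
      apply (rule exI[of _ 3]; auto simp: Reg_def Cstar_def Ctri_def)
      done
  qed
qed

definition lt :: "triple \<Rightarrow> nat" where
  "lt p = (THE k. k < 4 \<and> p \<in> Reg k)"

lemma lt_eq: "p \<in> Reg k \<Longrightarrow> lt p = k"
  unfolding lt_def
  by (rule the_equality) (auto intro: Reg_lt4 Reg_disj)

lemma lt_Cstar: "p \<in> Cstar \<Longrightarrow> lt p < 4 \<and> p \<in> Reg (lt p)"
  using Cstar_Reg lt_eq by blast

lemma Ped_Reg: "p \<in> Reg k \<Longrightarrow> Ped p = Tm k p"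
proof -
  assume h: "p \<in> Reg k"
  then have k: "k < 4" by (rule Reg_lt4)
  have d: "\<And>l. l < 4 \<Longrightarrow> p \<in> Reg l \<longleftrightarrow> l = k" using h Reg_disj by blast
  obtain a b c where p: "p = (a,b,c)" by (cases p)
  show ?thesis using k d[of 0] d[of 1] d[of 2] d[of 3] h unfolding Ped_def Tm_def p
    by (auto simp del: Reg_def)
qed

lemma itin_nth: "j < n \<Longrightarrow> itin n p ! j = lt ((Ped ^^ j) p)"
  by (simp add: itin_def lt_def)

lemma length_itin[simp]: "length (itin n p) = n"
  by (simp add: itin_def)

definition D :: "triple \<Rightarrow> triple \<Rightarrow> real" where
  "D x y = \<bar>fst x - fst y\<bar> + \<bar>fst (snd x) - fst (snd y)\<bar> + \<bar>snd (snd x) - snd (snd y)\<bar>"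

lemma D_Tm: "D (Tm k x) (Tm k y) = 2 * D x y"
proof -
  obtain a b c a' b' c' where x: "x = (a,b,c)" and y: "y = (a',b',c')" by (cases x, cases y) auto
  have e1: "abs (2 * u - 2 * v) = 2 * abs (u - v)" for u v :: real by (simp add: abs_if)
  have e2: "abs ((1 - 2 * u) - (1 - 2 * v)) = 2 * abs (u - v)" for u v :: real by (simp add: abs_if)
  have e3: "abs ((2 * u - 1) - (2 * v - 1)) = 2 * abs (u - v)" for u v :: real by (simp add: abs_if)
  consider "k = 0" | "k = 1" | "k = 2" | "k \<noteq> 0 \<and> k \<noteq> 1 \<and> k \<noteq> 2" by blast
  then show ?thesis
  proof cases
    case 1 then show ?thesis unfolding x y D_def Tm_def by (simp add: abs_if)
  next
    case 2 then show ?thesis unfolding x y D_def Tm_def by (simp add: abs_if)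
  next
    case 3 then show ?thesis unfolding x y D_def Tm_def by (simp add: abs_if)
  next
    case 4 then show ?thesis unfolding x y D_def Tm_def by (simp add: abs_if)
  qed
qed

lemma D_zero: "D x y = 0 \<Longrightarrow> x = y"
  unfolding D_def by (cases x, cases y) (auto simp: prod_eq_iff)

lemma D_nonneg: "D x y \<ge> 0"
  unfolding D_def by simp

lemma inj_core:
  assumes n: "n \<ge> 1" and pp: "(Ped ^^ n) p = p" and qq: "(Ped ^^ n) q = q"
    and h: "\<And>j. j < n \<Longrightarrow> (Ped ^^ j) p \<in> Cstar \<and> (Ped ^^ j) q \<in> Cstar \<and> lt ((Ped ^^ j) p) = lt ((Ped ^^ j) q)"
  shows "p = q"
proof -
  have "j \<le> n \<Longrightarrow> D ((Ped ^^ j) p) ((Ped ^^ j) q) = 2^j * D p q" for j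
  proof (induction j)
    case 0 then show ?case by simp
  next
    case (Suc j)
    then have j: "j < n" by simp
    from h[OF j] have hp: "(Ped ^^ j) p \<in> Reg (lt ((Ped ^^ j) p))" and hq: "(Ped ^^ j) q \<in> Reg (lt ((Ped ^^ j) p))"
      using lt_Cstar[of "(Ped ^^ j) p"] lt_Cstar[of "(Ped ^^ j) q"] by auto
    have "D ((Ped ^^ Suc j) p) ((Ped ^^ Suc j) q) = D (Tm (lt ((Ped ^^ j) p)) ((Ped ^^ j) p)) (Tm (lt ((Ped ^^ j) p)) ((Ped ^^ j) q))"
      using Ped_Reg[OF hp] Ped_Reg[OF hq] by simp
    also have "\<dots> = 2 * D ((Ped ^^ j) p) ((Ped ^^ j) q)" by (rule D_Tm)
    finally show ?case using Suc by simp
  qed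
  from this[of n] pp qq have e: "D p q = 2^n * D p q" by simp
  have "(2::real)^n \<ge> 2^1" using n by (intro power_increasing) auto
  with e D_nonneg[of p q] have "D p q = 0"
  proof -
    have "(2^n - 1) * D p q = 0" using e by (simp add: algebra_simps)
    moreover have "(2::real)^n - 1 \<noteq> 0" using \<open>(2::real)^n \<ge> 2^1\<close> by simp
    ultimately show ?thesis by simp
  qed
  then show ?thesis by (rule D_zero)
qed

lemma funpow_mult_period: "(f ^^ n) p = p \<Longrightarrow> (f ^^ (n * m)) p = p"
  proof (induction m)
  case (Suc m) then show ?case by (simp add: funpow_add)
qed simp


lemma funpow_mod:
  assumes "n \<ge> 1" "(f ^^ n) p = p"
  shows "(f ^^ j) p = (f ^^ (j mod n)) p"
proof -
  have "(f ^^ j) p = (f ^^ (j mod n + n * (j div n))) p" by simp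
  also have "\<dots> = (f ^^ (j mod n)) ((f ^^ (n * (j div n))) p)" by (subst funpow_add) simp
  also have "\<dots> = (f ^^ (j mod n)) p" using funpow_mult_period[OF assms(2)] by simp
  finally show ?thesis .
qed

lemma Tset_iter:
  assumes "p \<in> Tset n" "n \<ge> 1"
  shows "(Ped ^^ j) p \<in> Cstar"
proof -
  have "(Ped ^^ j) p = (Ped ^^ (j mod n)) p" using assms by (intro funpow_mod) (auto simp: Tset_def)
  moreover have "j mod n < n" using assms by simp
  ultimately show ?thesis using assms by (auto simp: Tset_def)
qed

lemma Tset_lt:
  assumes "p \<in> Tset n" "n \<ge> 1"
  shows "lt ((Ped ^^ j) p) = itin n p ! (j mod n)"
proof -
  have "(Ped ^^ j) p = (Ped ^^ (j mod n)) p" using assms by (intro funpow_mod) (auto simp: Tset_def)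
  moreover have "j mod n < n" using assms by simp
  ultimately show ?thesis by (simp add: itin_nth)
qed

definition dec :: "nat \<Rightarrow> nat \<Rightarrow> nat" where
  "dec x y = (if x = 0 \<and> y = 1 then 0 else if x = 0 \<and> y = 0 then 1 else if x = 1 \<and> y = 1 then 2 else 3)"

lemma dec_eta: "x < 4 \<Longrightarrow> dec (eta_col x ! 0) (eta_col x ! 1) = x"
  by (auto simp: dec_def eta_col_def)

lemma eta_col_01: "eta_col x ! 0 \<in> {0,1}" "eta_col x ! 1 \<in> {0,1}"
  by (auto simp: eta_col_def)

lemma eta_rows: "eta w ! 0 = map (\<lambda>x. eta_col x ! 0) w" "eta w ! 1 = map (\<lambda>x. eta_col x ! 1) w"
  "length (eta w) = 2"
  by (auto simp: eta_def)

lemma eta_inj: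
  assumes "set w \<subseteq> {..<4}" "set v \<subseteq> {..<4}" "eta w = eta v"
  shows "w = v"
proof -
  have r: "map (\<lambda>x. eta_col x ! 0) w = map (\<lambda>x. eta_col x ! 0) v \<and> map (\<lambda>x. eta_col x ! 1) w = map (\<lambda>x. eta_col x ! 1) v"
    using assms(3) unfolding eta_def by (simp only: list.inject)
  have l: "length w = length v" using r map_eq_imp_length_eq by blast
  show ?thesis
  proof (rule nth_equalityI[OF l])
    fix j assume j: "j < length w"
    have a: "eta_col (w ! j) ! 0 = eta_col (v ! j) ! 0"
      using arg_cong[OF conjunct1[OF r], of "\<lambda>xs. xs ! j"] j l by (simp only: nth_map)
    have b: "eta_col (w ! j) ! 1 = eta_col (v ! j) ! 1"
      using arg_cong[OF conjunct2[OF r], of "\<lambda>xs. xs ! j"] j l by (simp only: nth_map)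
    have "w ! j \<in> set w" "v ! j \<in> set v" using j l by simp_all
    then have "w ! j < 4" "v ! j < 4" using assms(1,2) by auto
    then show "w ! j = v ! j" using dec_eta[of "w ! j"] dec_eta[of "v ! j"] a b by metis
  qed
qed

lemma itin_set:
  assumes "p \<in> Tset n" "n \<ge> 1"
  shows "set (itin n p) \<subseteq> {..<4}"
proof
  fix x assume "x \<in> set (itin n p)"
  then obtain j where j: "j < n" "x = itin n p ! j" by (auto simp: in_set_conv_nth)
  then show "x \<in> {..<4}" using lt_Cstar[OF Tset_iter[OF assms, of j]] itin_nth[OF j(1)] by simp
qed

lemma inj_Tset: "n \<ge> 1 \<Longrightarrow> inj_on (\<lambda>p. eta (itin n p)) (Tset n)"
proof (rule inj_onI)
  fix p q assume n: "n \<ge> 1" and p: "p \<in> Tset n" and q: "q \<in> Tset n" and e: "eta (itin n p) = eta (itin n q)"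
  have i: "itin n p = itin n q" using eta_inj[OF itin_set[OF p n] itin_set[OF q n] e] .
  show "p = q"
  proof (rule inj_core[OF n])
    show "(Ped ^^ n) p = p" "(Ped ^^ n) q = q" using p q by (auto simp: Tset_def)
    fix j assume j: "j < n"
    show "(Ped ^^ j) p \<in> Cstar \<and> (Ped ^^ j) q \<in> Cstar \<and> lt ((Ped ^^ j) p) = lt ((Ped ^^ j) q)"
      using Tset_iter[OF p n] Tset_iter[OF q n] i itin_nth[OF j, of p] itin_nth[OF j, of q] by simp
  qed
qed

lemma nth_concat_replicate:
  "j < q * length xs \<Longrightarrow> concat (replicate q xs) ! j = xs ! (j mod length xs)"
proof (induction q arbitrary: j)
  case 0 then show ?case by simp
next
  case (Suc q)
  show ?case
  proof (cases "j < length xs")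
    case True then show ?thesis by (simp add: nth_append)
  next
    case False
    then have "j - length xs < q * length xs" using Suc.prems by simp
    from Suc.IH[OF this] False show ?thesis
      by (simp add: nth_append le_mod_geq)
  qed
qed

lemma length_wpow: "length (wpow V p q) = p * length V"
  by (simp add: wpow_def length_concat sum_list_replicate)

lemma c_double: "x \<in> Reg 1 \<or> x \<in> Reg 2 \<Longrightarrow> snd (snd (Ped x)) = 2 * snd (snd x)"
proof -
  assume h: "x \<in> Reg 1 \<or> x \<in> Reg 2"
  obtain a b c where x: "x = (a,b,c)" by (cases x)
  from h show ?thesis
  proof
    assume "x \<in> Reg 1" then show ?thesis by (simp add: Ped_Reg Tm_def x)
  next
    assume "x \<in> Reg 2" then show ?thesis by (simp add: Ped_Reg Tm_def x)
  qed
qed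

lemma rows_equal_contra:
  assumes p: "p \<in> Tset n" and n: "n \<ge> 1" and h: "\<And>j. j < n \<Longrightarrow> itin n p ! j \<in> {1,2}"
  shows False
proof -
  have c: "j \<le> n \<Longrightarrow> snd (snd ((Ped ^^ j) p)) = 2^j * snd (snd p)" for j
  proof (induction j)
    case 0 then show ?case by simp
  next
    case (Suc j)
    then have j: "j < n" by simp
    have "(Ped ^^ j) p \<in> Reg (lt ((Ped ^^ j) p))" using lt_Cstar[OF Tset_iter[OF p n]] by blast
    moreover have "lt ((Ped ^^ j) p) \<in> {1,2}" using h[OF j] itin_nth[OF j, of p] by simp
    ultimately have "(Ped ^^ j) p \<in> Reg 1 \<or> (Ped ^^ j) p \<in> Reg 2" by auto
    then have "snd (snd ((Ped ^^ Suc j) p)) = 2 * snd (snd ((Ped ^^ j) p))" using c_double by simp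
    then show ?case using Suc by simp
  qed
  have pos: "snd (snd p) > 0" using p by (auto simp: Tset_def Ctri_def)
  have "snd (snd p) = 2^n * snd (snd p)" using c[of n] p by (simp add: Tset_def)
  moreover have "(2::real)^n \<ge> 2^1" using n by (intro power_increasing) auto
  ultimately have "(2^n - 1) * snd (snd p) = 0" "(2::real)^n - 1 \<noteq> 0" by (simp_all add: algebra_simps)
  then show False using pos by simp
qed

lemma shift_contra:
  assumes p: "p \<in> Tset n" and n: "n \<ge> 1" and d: "1 \<le> d" "d < n" "d dvd n"
    and h: "\<And>j. j < n \<Longrightarrow> itin n p ! j = itin n p ! (j mod d)"
  shows False
proof -
  have pp: "(Ped ^^ n) p = p" using p by (simp add: Tset_def)
  have "(Ped ^^ d) p = p"
  proof (rule inj_core[OF n])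
    show "(Ped ^^ n) ((Ped ^^ d) p) = (Ped ^^ d) p"
    proof -
      have "(Ped ^^ (n + d)) p = (Ped ^^ (d + n)) p" by (simp add: add.commute)
      then show ?thesis using pp by (simp add: funpow_add)
    qed
    show "(Ped ^^ n) p = p" by (rule pp)
    fix j assume j: "j < n"
    have e: "(Ped ^^ j) ((Ped ^^ d) p) = (Ped ^^ (j + d)) p" by (simp add: funpow_add)
    have "lt ((Ped ^^ (j + d)) p) = itin n p ! ((j + d) mod n)" by (rule Tset_lt[OF p n])
    also have "\<dots> = itin n p ! (((j + d) mod n) mod d)" using h n by simp
    also have "((j + d) mod n) mod d = j mod d" using d by (simp add: mod_mod_cancel)
    also have "itin n p ! (j mod d) = itin n p ! j" using h[OF j] by simp
    also have "\<dots> = lt ((Ped ^^ j) p)" by (simp add: itin_nth[OF j])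
    finally show "(Ped ^^ j) ((Ped ^^ d) p) \<in> Cstar \<and> (Ped ^^ j) p \<in> Cstar \<and> lt ((Ped ^^ j) ((Ped ^^ d) p)) = lt ((Ped ^^ j) p)"
      using e Tset_iter[OF p n] by simp
  qed
  then show False using p d by (auto simp: Tset_def)
qed

lemma eta_col_eq01: "x < 4 \<Longrightarrow> eta_col x ! 0 = eta_col x ! 1 \<Longrightarrow> x \<in> {1,2}"
  by (cases "x = 0"; cases "x = 1"; cases "x = 2"; cases "x = 3") (auto simp: eta_col_def)

lemma fwd:
  assumes p: "p \<in> Tset n" and n: "n \<ge> 1"
  shows "eta (itin n p) \<in> Wset n"
proof -
  define w where "w = itin n p"
  have ws: "set w \<subseteq> {..<4}" unfolding w_def by (rule itin_set[OF p n])
  have wl: "length w = n" by (simp add: w_def)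
  have w4: "j < n \<Longrightarrow> w ! j < 4" for j using ws wl nth_mem by fastforce
  have iw: "is_word 2 n (eta w)"
  proof -
    have s0: "set (map (\<lambda>x. eta_col x ! 0) w) \<subseteq> {0,1}" using eta_col_01(1) by (simp add: image_subset_iff)
    have s1: "set (map (\<lambda>x. eta_col x ! 1) w) \<subseteq> {0,1}" using eta_col_01(2) by (simp add: image_subset_iff)
    show ?thesis unfolding is_word_def eta_def using s0 s1 wl by simp
  qed
  have "\<not> periodic (eta w)"
  proof
    assume "periodic (eta w)"
    then obtain V m n' pp q where m: "m \<ge> 1" and n': "n' \<ge> 1" and V: "is_word m n' V"
      and pq: "pp \<ge> 2 \<or> q \<ge> 2" and W: "eta w = wpow V pp q"
      unfolding periodic_def by blast
    have "pp * m = 2" using arg_cong[OF W, of length] V by (simp add: length_wpow is_word_def eta_def)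
    then have "(pp = 1 \<and> m = 2) \<or> (pp = 2 \<and> m = 1)"
    proof -
      assume e: "pp * m = 2"
      have "pp \<le> pp * m" using m by simp
      then have "pp \<le> 2" using e by simp
      moreover have "pp \<noteq> 0" using e by (metis mult_zero_left zero_neq_numeral)
      ultimately have "pp = 1 \<or> pp = 2" by arith
      then show ?thesis using e by auto
    qed
    then show False
    proof
      assume a: "pp = 2 \<and> m = 1"
      then obtain r where Vr: "V = [r]" using V by (cases V) (auto simp: is_word_def)
      have "eta w = [concat (replicate q r), concat (replicate q r)]"
        using W a Vr by (simp add: wpow_def numeral_2_eq_2)
      then have "map (\<lambda>x. eta_col x ! 0) w = map (\<lambda>x. eta_col x ! 1) w"
        unfolding eta_def by simp
      then have "\<And>j. j < n \<Longrightarrow> eta_col (w ! j) ! 0 = eta_col (w ! j) ! 1"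
        using wl by (metis nth_map)
      then show False using rows_equal_contra[OF p n] eta_col_eq01 w4 unfolding w_def by blast
    next
      assume a: "pp = 1 \<and> m = 2"
      then have q: "q \<ge> 2" using pq by simp
      obtain r0 r1 where Vr: "V = [r0, r1]" using V a
        by (cases V; cases "tl V") (auto simp: is_word_def)
      have lr: "length r0 = n'" "length r1 = n'" using V Vr by (auto simp: is_word_def)
      have E: "eta w = [concat (replicate q r0), concat (replicate q r1)]"
        using W a Vr by (simp add: wpow_def)
      have nq: "n = q * n'" using arg_cong[OF E, of "\<lambda>W. length (W ! 0)"] wl lr
        by (simp add: eta_def length_concat sum_list_replicate)
      have row: "map (\<lambda>x. eta_col x ! i) w ! j = map (\<lambda>x. eta_col x ! i) w ! (j mod n')"
        if i: "i \<in> {0,1}" and j: "j < n" for i j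
      proof -
        have jn: "j mod n' < q * n'" using n' q
        proof -
          have "j mod n' < n'" using n' by simp
          moreover have "n' \<le> q * n'" using q by simp
          ultimately show ?thesis by linarith
        qed
        have "map (\<lambda>x. eta_col x ! i) w = (if i = 0 then concat (replicate q r0) else concat (replicate q r1))"
          using E i unfolding eta_def by auto
        then show ?thesis using j jn nq lr i
          by (auto simp: nth_concat_replicate)
      qed
      have per: "\<And>j. j < n \<Longrightarrow> w ! j = w ! (j mod n')"
      proof -
        fix j assume j: "j < n"
        have jj: "j mod n' < n" using j n' by (meson le_less_trans mod_less_eq_dividend)
        have "eta_col (w ! j) ! 0 = eta_col (w ! (j mod n')) ! 0"
          using row[of 0 j] j jj wl by simp
        moreover have "eta_col (w ! j) ! 1 = eta_col (w ! (j mod n')) ! 1"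
          using row[of 1 j] j jj wl by simp
        ultimately show "w ! j = w ! (j mod n')"
          using dec_eta[OF w4[OF j]] dec_eta[OF w4[OF jj]] by metis
      qed
      have "n' < n" using nq q n' by simp
      moreover have "n' dvd n" using nq by simp
      ultimately show False using shift_contra[OF p n n'] per unfolding w_def by blast
    qed
  qed
  then show ?thesis using iw unfolding Wset_def primitive_def w_def by simp
qed


definition K :: "triple set" where
  "K = {(a,b,c). b \<le> a \<and> c \<le> b \<and> 0 \<le> c \<and> a + b + c = 1}"

primrec Gw :: "nat list \<Rightarrow> triple \<Rightarrow> triple" where
  "Gw [] x = x"
| "Gw (k # ks) x = Gm k (Gw ks x)"

lemma Gm_K: "x \<in> K \<Longrightarrow> Gm k x \<in> K"
  by (cases x) (auto simp: K_def Gm_def field_simps)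

lemma Gw_K: "x \<in> K \<Longrightarrow> Gw ws x \<in> K"
  by (induction ws) (auto simp: Gm_K)

definition sq3 :: "triple \<Rightarrow> triple \<Rightarrow> real" where
  "sq3 x y = (fst x - fst y)^2 + (fst (snd x) - fst (snd y))^2 + (snd (snd x) - snd (snd y))^2"

lemma dist3: "dist x y = sqrt (sq3 x y)"
proof -
  obtain a b c a' b' c' where x: "x = (a,b,c)" and y: "y = (a',b',c')" by (cases x, cases y) auto
  have "dist x y = sqrt ((dist a a')^2 + (sqrt ((dist b b')^2 + (dist c c')^2))^2)"
    by (simp add: x y dist_Pair_Pair)
  also have "\<dots> = sqrt ((a - a')^2 + (b - b')^2 + (c - c')^2)"
    by (simp add: dist_real_def add.assoc)
  finally show ?thesis by (simp add: sq3_def x y)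
qed

lemma sq3_Gm: "sq3 (Gm k x) (Gm k y) = sq3 x y / 4"
proof -
  obtain a b c a' b' c' where x: "x = (a,b,c)" and y: "y = (a',b',c')" by (cases x, cases y) auto
  show ?thesis unfolding x y sq3_def Gm_def
    by (simp add: power2_eq_square field_simps)
qed

lemma dist_Gm: "dist (Gm k x) (Gm k y) = dist x y / 2"
proof -
  have s4: "sqrt 4 = (2::real)" using real_sqrt_abs[of 2] by simp
  show ?thesis unfolding dist3 sq3_Gm by (simp add: real_sqrt_divide s4)
qed

lemma dist_Gw: "dist (Gw ws x) (Gw ws y) = dist x y / 2 ^ length ws"
  by (induction ws) (simp_all add: dist_Gm)

lemma closed_K: "closed K"
proof -
  have "K = {x. fst (snd x) \<le> fst x} \<inter> {x. snd (snd x) \<le> fst (snd x)} \<inter> {x. 0 \<le> snd (snd x)}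
      \<inter> {x. fst x + fst (snd x) + snd (snd x) = (1::real)}"
    by (auto simp: K_def)
  moreover have "closed \<dots>"
    by (intro closed_Int closed_Collect_le closed_Collect_eq continuous_intros)
  ultimately show ?thesis by simp
qed

lemma Gw_fix:
  assumes "ws \<noteq> []"
  shows "\<exists>x\<in>K. Gw ws x = x"
proof -
  have "\<exists>!x\<in>K. Gw ws x = x"
  proof (rule Banach_fix[of K "1/2"])
    show "complete K" using closed_K by (simp add: complete_eq_closed)
    have "(1,0,0) \<in> K" by (simp add: K_def)
    then show "K \<noteq> {}" by blast
    show "Gw ws ` K \<subseteq> K" using Gw_K by blast
    fix x y :: triple
    have "(2::real) ^ 1 \<le> 2 ^ length ws" using assms by (intro power_increasing) (auto simp: Suc_le_eq)
    then have "dist x y / 2 ^ length ws \<le> 1/2 * dist x y"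
      using divide_left_mono[of 2 "2 ^ length ws" "dist x y"] by simp
    then show "dist (Gw ws x) (Gw ws y) \<le> 1/2 * dist x y" by (simp add: dist_Gw)
  qed auto
  then show ?thesis by blast
qed

lemma k4: "k < (4::nat) \<Longrightarrow> k = 0 \<or> k = 1 \<or> k = 2 \<or> k = 3" by arith

lemma Gm_simps:
  "Gm 0 (a,b,c) = ((1 - c)/2, (1 - b)/2, (1 - a)/2)"
  "Gm 1 (a,b,c) = ((a + 1)/2, b/2, c/2)"
  "Gm (Suc 0) (a,b,c) = ((a + 1)/2, b/2, c/2)"
  "Gm 2 (a,b,c) = ((b + 1)/2, a/2, c/2)"
  "Gm 3 (a,b,c) = ((c + 1)/2, a/2, b/2)"
  by (simp_all add: Gm_def)

lemma stepA:
  assumes "y \<in> K" "k < 4" "fst (Gm k y) = 1"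
  shows "k = 1 \<and> fst y = 1"
proof -
  obtain a b c where y: "y = (a,b,c)" by (cases y)
  show ?thesis using assms k4[OF assms(2)] unfolding y
    by (auto simp: Gm_simps K_def)
qed

lemma stepB:
  assumes "y \<in> K" "k < 4" "fst y < 1" "snd (snd (Gm k y)) = 0"
  shows "(k = 1 \<or> k = 2) \<and> snd (snd y) = 0"
proof -
  obtain a b c where y: "y = (a,b,c)" by (cases y)
  show ?thesis using assms k4[OF assms(2)] unfolding y
    by (auto simp: Gm_simps K_def)
qed

definition Q3 :: "triple \<Rightarrow> bool" where
  "Q3 x \<longleftrightarrow> fst x = fst (snd x) \<or> fst (snd x) = snd (snd x)"

definition Eq :: "triple \<Rightarrow> bool" where
  "Eq x \<longleftrightarrow> fst x = fst (snd x) \<and> fst (snd x) = snd (snd x)"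

lemma stepQ3:
  assumes "y \<in> K" "k < 4" "fst y < 1" "Q3 (Gm k y)"
  shows "Q3 y"
proof -
  obtain a b c where y: "y = (a,b,c)" by (cases y)
  show ?thesis using assms k4[OF assms(2)] unfolding y
    by (auto simp: Gm_simps K_def Q3_def)
qed

lemma stepAk:
  assumes "y \<in> K" "k < 4" "fst y < 1" "fst (Gm k y) = fst (snd (Gm k y))"
  shows "k = 0"
proof -
  obtain a b c where y: "y = (a,b,c)" by (cases y)
  show ?thesis using assms k4[OF assms(2)] unfolding y
    by (auto simp: Gm_simps K_def)
qed

lemma stepE:
  assumes "y \<in> K" "k < 4" "fst y < 1" "Eq (Gm k y)"
  shows "k = 0 \<and> Eq y"
proof -
  obtain a b c where y: "y = (a,b,c)" by (cases y)
  show ?thesis using assms k4[OF assms(2)] unfolding y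
    by (auto simp: Gm_simps K_def Eq_def)
qed

lemma stepB2:
  assumes "y \<in> K" "fst (snd (Gm 2 y)) = snd (snd (Gm 2 y))"
  shows "Eq y"
proof -
  obtain a b c where y: "y = (a,b,c)" by (cases y)
  show ?thesis using assms unfolding y
    by (auto simp: Gm_simps K_def Eq_def)
qed

lemma stepB3:
  assumes "y \<in> K" "fst (snd (Gm 3 y)) = snd (snd (Gm 3 y))"
  shows "fst y = fst (snd y)"
proof -
  obtain a b c where y: "y = (a,b,c)" by (cases y)
  show ?thesis using assms unfolding y
    by (auto simp: Gm_simps K_def)
qed

lemma reg_Gm:
  assumes "y \<in> K" "snd (snd y) > 0" "k < 4"
    and "k = 2 \<Longrightarrow> fst y > fst (snd y)" and "k = 3 \<Longrightarrow> fst (snd y) > snd (snd y)"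
  shows "Gm k y \<in> Reg k"
proof -
  obtain a b c where y: "y = (a,b,c)" by (cases y)
  show ?thesis using assms k4[OF assms(3)] unfolding y
    by (auto simp: Gm_simps K_def Reg_def Cstar_def Ctri_def field_simps)
qed

lemma K_le1: "y \<in> K \<Longrightarrow> fst y \<le> 1"
  by (auto simp: K_def)

lemma K_ge: "y \<in> K \<Longrightarrow> fst (snd y) \<le> fst y \<and> snd (snd y) \<le> fst (snd y) \<and> 0 \<le> snd (snd y)"
  by (auto simp: K_def)

lemma cyc:
  fixes P :: "nat \<Rightarrow> bool"
  assumes step: "\<And>j. P j \<Longrightarrow> P (Suc j)" and per: "\<And>j. P j = P (j mod n)" and n: "n \<ge> 1" and i: "P i"
  shows "P j"
proof -
  have all: "P (i + m)" for m by (induction m) (auto simp: i step)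
  have "j + n * i = i + (j + n * i - i)" using n by (simp add: add_le_mono trans_le_add2)
  then have "P (j + n * i)" using all by metis
  then show ?thesis using per[of "j + n * i"] per[of j] by simp
qed

lemma periodic_mult:
  fixes f :: "nat \<Rightarrow> 'a" and x :: nat
  shows "(\<And>j. f (j + d) = f j) \<Longrightarrow> f (j + d * x) = f j"
proof (induction x)
  case (Suc x)
  have "f (j + d * Suc x) = f ((j + d * x) + d)" by (simp add: algebra_simps)
  also have "\<dots> = f (j + d * x)" by (rule Suc.prems)
  finally show ?case using Suc by simp
qed simp

lemma exist:
  assumes n: "n \<ge> 1" and wl: "length w = n" and ws: "set w \<subseteq> {..<4}"
    and h03: "\<exists>i<n. w ! i = 0 \<or> w ! i = 3"
    and prim: "\<And>g. 1 \<le> g \<Longrightarrow> g < n \<Longrightarrow> g dvd n \<Longrightarrow> \<not> (\<forall>j<n. w ! j = w ! (j mod g))"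
  shows "\<exists>p\<in>Tset n. itin n p = w"
proof -
  have wne: "w \<noteq> []" using wl n by auto
  obtain x0 where x0K: "x0 \<in> K" and fx: "Gw w x0 = x0" using Gw_fix[OF wne] by blast
  define pt where "pt j = Gw (drop (j mod n) w) x0" for j
  define l where "l j = w ! (j mod n)" for j
  have l4: "l j < 4" for j
  proof -
    have "j mod n < n" using n by simp
    then have "w ! (j mod n) \<in> set w" using wl by simp
    then show ?thesis using ws by (auto simp: l_def)
  qed
  have ptK: "pt j \<in> K" for j using Gw_K x0K by (simp add: pt_def)
  have ptmod: "pt j = pt (j mod n)" for j by (simp add: pt_def)
  have rec: "pt j = Gm (l j) (pt (Suc j))" for j
  proof -
    let ?i = "j mod n"
    have i: "?i < n" using n by simp
    have "drop ?i w = w ! ?i # drop (Suc ?i) w" using i wl by (simp add: Cons_nth_drop_Suc)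
    then have "pt j = Gm (l j) (Gw (drop (Suc ?i) w) x0)" by (simp add: pt_def l_def)
    also have "Gw (drop (Suc ?i) w) x0 = pt (Suc j)"
    proof (cases "Suc ?i < n")
      case True
      then have "Suc j mod n = Suc ?i" by (simp add: mod_Suc)
      then show ?thesis by (simp add: pt_def)
    next
      case False
      then have si: "Suc ?i = n" using i by simp
      then have "Suc j mod n = 0" by (simp add: mod_Suc)
      then show ?thesis using si wl fx by (simp add: pt_def)
    qed
    finally show ?thesis .
  qed
  have pt0: "pt 0 = x0" using fx by (simp add: pt_def)
  have lw: "j < n \<Longrightarrow> l j = w ! j" for j by (simp add: l_def)
  have lmod: "l j = l (j mod n)" for j by (simp add: l_def)
  have cycpt: "Q (pt m)" if st: "\<And>k. Q (pt k) \<Longrightarrow> Q (pt (Suc k))" and i: "Q (pt i)" for Q :: "triple \<Rightarrow> bool" and i m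
    by (rule cyc[where P = "\<lambda>m. Q (pt m)" and n = n and i = i]) (use st i n ptmod in auto)
  have A: "fst (pt j) < 1" for j
  proof (rule ccontr)
    assume "\<not> fst (pt j) < 1"
    then have j1: "fst (pt j) = 1" using K_le1[OF ptK[of j]] by linarith
    have st: "fst (pt k) = 1 \<Longrightarrow> fst (pt (Suc k)) = 1" for k
      using stepA[OF ptK[of "Suc k"] l4[of k]] rec[of k] by simp
    have all: "fst (pt m) = 1" for m by (rule cycpt[where Q = "\<lambda>x. fst x = 1", OF st j1])
    have "l m = 1" for m using stepA[OF ptK[of "Suc m"] l4[of m]] rec[of m] all[of m] by simp
    with h03 lw show False by force
  qed
  have Cpos: "snd (snd (pt j)) > 0" for j
  proof (rule ccontr)
    assume "\<not> snd (snd (pt j)) > 0"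
    then have j1: "snd (snd (pt j)) = 0" using K_ge[OF ptK[of j]] by linarith
    have st: "snd (snd (pt k)) = 0 \<Longrightarrow> snd (snd (pt (Suc k))) = 0" for k
      using stepB[OF ptK[of "Suc k"] l4[of k] A[of "Suc k"]] rec[of k] by simp
    have all: "snd (snd (pt m)) = 0" for m by (rule cycpt[where Q = "\<lambda>x. snd (snd x) = 0", OF st j1])
    have l12: "l m = 1 \<or> l m = 2" for m using stepB[OF ptK[of "Suc m"] l4[of m] A[of "Suc m"]] rec[of m] all[of m] by simp
    obtain i where i: "i < n" "w ! i = 0 \<or> w ! i = 3" using h03 by blast
    have "l i = w ! i" using lw i by simp
    then show False using l12[of i] i by auto
  qed
  have Q3all: "Q3 (pt m)" if "Q3 (pt i)" for i m
  proof (rule cycpt[where Q = Q3, OF _ that])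
    fix k assume "Q3 (pt k)"
    then show "Q3 (pt (Suc k))" using stepQ3[OF ptK[of "Suc k"] l4[of k] A[of "Suc k"]] rec[of k] by simp
  qed
  have Eall: "Eq (pt m)" if "Eq (pt i)" for i m
  proof (rule cycpt[where Q = Eq, OF _ that])
    fix k assume "Eq (pt k)"
    then show "Eq (pt (Suc k))" using stepE[OF ptK[of "Suc k"] l4[of k] A[of "Suc k"]] rec[of k] by simp
  qed
  have E0: "Eq (pt m) \<Longrightarrow> l m = 0" for m
    using stepE[OF ptK[of "Suc m"] l4[of m] A[of "Suc m"]] rec[of m] by simp
  have Ak: "fst (pt m) = fst (snd (pt m)) \<Longrightarrow> l m = 0" for m
    using stepAk[OF ptK[of "Suc m"] l4[of m] A[of "Suc m"]] rec[of m] by simp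
  have R: "pt j \<in> Reg (l j)" for j
  proof -
    let ?y = "pt (Suc j)"
    have c2: "fst ?y > fst (snd ?y)" if l2: "l j = 2"
    proof (rule ccontr)
      assume "\<not> fst ?y > fst (snd ?y)"
      then have "fst ?y = fst (snd ?y)" using K_ge[OF ptK[of "Suc j"]] by linarith
      then have "Q3 ?y" by (simp add: Q3_def)
      then have "Q3 (pt j)" by (rule Q3all)
      then show False
      proof (unfold Q3_def, elim disjE)
        assume "fst (pt j) = fst (snd (pt j))" then show False using Ak l2 by simp
      next
        assume "fst (snd (pt j)) = snd (snd (pt j))"
        then have "Eq ?y" using stepB2[OF ptK[of "Suc j"]] rec[of j] l2 by simp
        then have "Eq (pt j)" by (rule Eall)
        then show False using E0 l2 by simp
      qed
    qed
    have c3: "fst (snd ?y) > snd (snd ?y)" if l3: "l j = 3"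
    proof (rule ccontr)
      assume "\<not> fst (snd ?y) > snd (snd ?y)"
      then have bc: "fst (snd ?y) = snd (snd ?y)" using K_ge[OF ptK[of "Suc j"]] by linarith
      then have "Q3 ?y" by (simp add: Q3_def)
      then have "Q3 (pt j)" by (rule Q3all)
      then show False
      proof (unfold Q3_def, elim disjE)
        assume "fst (pt j) = fst (snd (pt j))" then show False using Ak l3 by simp
      next
        assume "fst (snd (pt j)) = snd (snd (pt j))"
        then have "fst ?y = fst (snd ?y)" using stepB3[OF ptK[of "Suc j"]] rec[of j] l3 by simp
        then have "Eq ?y" using bc by (simp add: Eq_def)
        then have "Eq (pt j)" by (rule Eall)
        then show False using E0 l3 by simp
      qed
    qed
    show ?thesis using reg_Gm[OF ptK[of "Suc j"] Cpos[of "Suc j"] l4[of j] c2 c3] rec[of j] by simp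
  qed
  have Pstep: "Ped (pt j) = pt (Suc j)" for j
    using Ped_Reg[OF R[of j]] rec[of j] Tm_Gm by metis
  have iter: "(Ped ^^ j) x0 = pt j" for j
    by (induction j) (simp_all add: pt0 Pstep)
  have Cs: "pt j \<in> Cstar" for j using R[of j] Reg_sub[OF l4[of j]] by blast
  have ltpt: "lt (pt j) = l j" for j using lt_eq[OF R[of j]] .
  have x0T: "x0 \<in> Tset n"
    unfolding Tset_def
  proof (intro CollectI conjI allI impI)
    show "x0 \<in> Ctri" using Cs[of 0] pt0 by (auto simp: Cstar_def)
    show "(Ped ^^ j) x0 \<in> Cstar" for j using iter Cs by simp
    show "(Ped ^^ n) x0 = x0" using iter[of n] ptmod[of n] pt0 by simp
    fix d assume d: "1 \<le> d \<and> d < n"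
    show "(Ped ^^ d) x0 \<noteq> x0"
    proof
      assume pd: "(Ped ^^ d) x0 = x0"
      have ptd: "pt (j + d) = pt j" for j
      proof -
        have "(Ped ^^ (j + d)) x0 = (Ped ^^ j) ((Ped ^^ d) x0)" by (simp add: funpow_add)
        then show ?thesis using pd iter by simp
      qed
      have ld: "l (j + d) = l j" for j using ptd ltpt by metis
      have ln: "l (j + n) = l j" for j using lmod[of "j + n"] lmod[of j] by simp
      define g where "g = gcd d n"
      have d0: "d \<noteq> 0" using d by simp
      obtain x y where xy: "d * x = n * y + g" using bezout_nat[OF d0, of n] g_def by blast
      have lg: "l (j + g) = l j" for j
      proof -
        have "l (j + g) = l ((j + g) + n * y)" using periodic_mult[of l n "j + g" y] ln by simp
        also have "(j + g) + n * y = j + d * x" using xy by simp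
        also have "l (j + d * x) = l j" using periodic_mult[of l d j x] ld by simp
        finally show ?thesis .
      qed
      have lgm: "l j = l (j mod g)" for j
      proof -
        have "l (j mod g + g * (j div g)) = l (j mod g)" using periodic_mult[of l g "j mod g" "j div g"] lg by simp
        then show ?thesis by simp
      qed
      have g1: "1 \<le> g" using d0 by (simp add: g_def Suc_le_eq)
      have gd: "g \<le> d" using d0 by (simp add: g_def gcd_le1_nat)
      have gn: "g dvd n" by (simp add: g_def)
      have "\<forall>j<n. w ! j = w ! (j mod g)"
      proof (intro allI impI)
        fix j assume j: "j < n"
        have "j mod g < n" using g1 gd d j by (meson le_less_trans mod_less_eq_dividend)
        then show "w ! j = w ! (j mod g)" using lgm[of j] lw[OF j] lw by simp
      qed
      then show False using prim[OF g1 _ gn] gd d by simp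
    qed
  qed
  have "itin n x0 = w"
  proof (rule nth_equalityI)
    show "length (itin n x0) = length w" using wl by simp
    fix j assume "j < length (itin n x0)"
    then have j: "j < n" by simp
    show "itin n x0 ! j = w ! j" using itin_nth[OF j] iter ltpt lw[OF j] by simp
  qed
  then show ?thesis using x0T by blast
qed

lemma dec_col: "x \<in> {0,1} \<Longrightarrow> y \<in> {0,1} \<Longrightarrow> eta_col (dec x y) = [x, y]"
  by (auto simp: dec_def eta_col_def)

lemma dec_lt: "dec x y < 4"
  by (simp add: dec_def)

lemma rep_eq:
  assumes "length r = n" "g dvd n" "1 \<le> g" "\<forall>j<n. r ! j = r ! (j mod g)" "g \<le> n"
  shows "concat (replicate (n div g) (take g r)) = r"
proof (rule nth_equalityI)
  have lt: "length (take g r) = g" using assms(1,5) by simp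
  show "length (concat (replicate (n div g) (take g r))) = length r"
    using assms(1,2) lt by (simp add: length_concat sum_list_replicate)
  fix j assume "j < length (concat (replicate (n div g) (take g r)))"
  then have j: "j < n div g * g" using lt by (simp add: length_concat sum_list_replicate)
  then have jn: "j < n" using assms(2) by simp
  have "concat (replicate (n div g) (take g r)) ! j = take g r ! (j mod g)"
    using nth_concat_replicate[of j "n div g" "take g r"] j lt by simp
  also have "\<dots> = r ! (j mod g)" using assms(3) by simp
  also have "\<dots> = r ! j" using assms(4)[rule_format, OF jn] by simp
  finally show "concat (replicate (n div g) (take g r)) ! j = r ! j" .
qed

lemma surjW:
  assumes n: "n \<ge> 1" and W: "W \<in> Wset n"
  shows "\<exists>p\<in>Tset n. eta (itin n p) = W"
proof -
  have iw: "is_word 2 n W" and pr: "\<not> periodic W" using W by (auto simp: Wset_def primitive_def)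
  have lW: "length W = 2" using iw by (simp add: is_word_def)
  obtain r0 r1 where Wr: "W = [r0, r1]"
  proof -
    have "W = [W ! 0, W ! 1]" using lW by (intro nth_equalityI) (auto simp: less_2_cases_iff)
    then show ?thesis using that by blast
  qed
  have l0: "length r0 = n" and l1: "length r1 = n" and s0: "set r0 \<subseteq> {0,1}" and s1: "set r1 \<subseteq> {0,1}"
    using iw Wr by (auto simp: is_word_def)
  define w where "w = map (\<lambda>j. dec (r0 ! j) (r1 ! j)) [0..<n]"
  have wl: "length w = n" by (simp add: w_def)
  have ws: "set w \<subseteq> {..<4}" by (auto simp: w_def dec_lt)
  have col: "j < n \<Longrightarrow> eta_col (w ! j) = [r0 ! j, r1 ! j]" for j
  proof -
    assume j: "j < n"
    have "r0 ! j \<in> set r0" "r1 ! j \<in> set r1" using j l0 l1 by simp_all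
    then have "r0 ! j \<in> {0,1}" "r1 ! j \<in> {0,1}" using s0 s1 by blast+
    then show ?thesis using j by (simp add: w_def dec_col)
  qed
  have ew: "eta w = W"
  proof -
    have "map (\<lambda>x. eta_col x ! 0) w = r0"
    proof (rule nth_equalityI)
      show "length (map (\<lambda>x. eta_col x ! 0) w) = length r0" using wl l0 by simp
      fix i assume "i < length (map (\<lambda>x. eta_col x ! 0) w)"
      then have i: "i < n" using wl by simp
      have "map (\<lambda>x. eta_col x ! 0) w ! i = eta_col (w ! i) ! 0" using i wl by (simp only: nth_map)
      also have "\<dots> = r0 ! i" unfolding col[OF i] by simp
      finally show "map (\<lambda>x. eta_col x ! 0) w ! i = r0 ! i" .
    qed
    moreover have "map (\<lambda>x. eta_col x ! 1) w = r1"
    proof (rule nth_equalityI)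
      show "length (map (\<lambda>x. eta_col x ! 1) w) = length r1" using wl l1 by simp
      fix i assume "i < length (map (\<lambda>x. eta_col x ! 1) w)"
      then have i: "i < n" using wl by simp
      have "map (\<lambda>x. eta_col x ! 1) w ! i = eta_col (w ! i) ! 1" using i wl by (simp only: nth_map)
      also have "\<dots> = r1 ! i" unfolding col[OF i] by simp
      finally show "map (\<lambda>x. eta_col x ! 1) w ! i = r1 ! i" .
    qed
    ultimately show ?thesis by (simp add: eta_def Wr)
  qed
  have h03: "\<exists>i<n. w ! i = 0 \<or> w ! i = 3"
  proof (rule ccontr)
    assume "\<not> ?thesis"
    then have n03: "\<forall>i<n. w ! i \<noteq> 0 \<and> w ! i \<noteq> 3" by simp
    have "\<forall>i<n. r0 ! i = r1 ! i"
    proof (intro allI impI)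
      fix i assume i: "i < n"
      have "w ! i \<in> set w" using i wl by simp
      then have "w ! i < 4" using ws by auto
      moreover have "w ! i \<noteq> 0" "w ! i \<noteq> 3" using n03 i by auto
      ultimately have "w ! i = 1 \<or> w ! i = 2" by linarith
      then have "eta_col (w ! i) ! 0 = eta_col (w ! i) ! 1" by (auto simp: eta_col_def)
      then show "r0 ! i = r1 ! i" unfolding col[OF i] by simp
    qed
    then have "r0 = r1" using l0 l1 by (intro nth_equalityI) auto
    then have "W = wpow [r0] 2 1" by (simp add: Wr wpow_def numeral_2_eq_2)
    moreover have "is_word 1 n [r0]" using l0 s0 by (simp add: is_word_def)
    ultimately have "periodic W" unfolding periodic_def using n
      by (intro exI[of _ "[r0]"] exI[of _ 1] exI[of _ n] exI[of _ 2] exI[of _ 1]) simp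
    then show False using pr by simp
  qed
  have prim: "\<not> (\<forall>j<n. w ! j = w ! (j mod g))" if g: "1 \<le> g" "g < n" "g dvd n" for g
  proof
    assume per: "\<forall>j<n. w ! j = w ! (j mod g)"
    have rp: "\<forall>j<n. r0 ! j = r0 ! (j mod g) \<and> r1 ! j = r1 ! (j mod g)"
    proof (intro allI impI)
      fix j assume j: "j < n"
      have jg: "j mod g < n" using g j by (meson le_less_trans mod_less_eq_dividend)
      have "w ! j = w ! (j mod g)" using per j by blast
      then have "eta_col (w ! j) = eta_col (w ! (j mod g))" by simp
      then show "r0 ! j = r0 ! (j mod g) \<and> r1 ! j = r1 ! (j mod g)"
        unfolding col[OF j] col[OF jg] by simp
    qed
    have rp0: "\<forall>j<n. r0 ! j = r0 ! (j mod g)" using rp by blast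
    have rp1: "\<forall>j<n. r1 ! j = r1 ! (j mod g)" using rp by blast
    have gle: "g \<le> n" using g by simp
    have e0: "concat (replicate (n div g) (take g r0)) = r0" by (rule rep_eq[OF l0 g(3) g(1) rp0 gle])
    have e1: "concat (replicate (n div g) (take g r1)) = r1" by (rule rep_eq[OF l1 g(3) g(1) rp1 gle])
    have "W = wpow [take g r0, take g r1] 1 (n div g)" using e0 e1 by (simp add: Wr wpow_def)
    moreover have "is_word 2 g [take g r0, take g r1]"
    proof -
      have "set (take g r0) \<subseteq> {0,1}" "set (take g r1) \<subseteq> {0,1}"
        using s0 s1 set_take_subset by (metis order.trans)+
      then show ?thesis using l0 l1 g by (simp add: is_word_def)
    qed
    moreover have "n div g \<ge> 2"
    proof -
      obtain k where k: "n = g * k" using g(3) by blast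
      then have "k \<ge> 2" using g by (cases k; cases "k - 1") auto
      then show ?thesis using k g by simp
    qed
    ultimately have "periodic W" unfolding periodic_def using g
      by (intro exI[of _ "[take g r0, take g r1]"] exI[of _ 2] exI[of _ g] exI[of _ 1] exI[of _ "n div g"]) simp
    then show False using pr by simp
  qed
  obtain p where "p \<in> Tset n" "itin n p = w" using exist[OF n wl ws h03 prim] by blast
  then show ?thesis using ew by metis
qed

theorem mainTheorem9:
  fixes n :: nat
  assumes "n \<ge> 1"
  shows "bij_betw (\<lambda>p. eta (itin n p)) (Tset n) (Wset n)"
  unfolding bij_betw_def
proof
  show "inj_on (\<lambda>p. eta (itin n p)) (Tset n)" by (rule inj_Tset[OF assms])
  show "(\<lambda>p. eta (itin n p)) ` Tset n = Wset n"
  proof (rule equalityI)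
    show "(\<lambda>p. eta (itin n p)) ` Tset n \<subseteq> Wset n" using fwd[OF _ assms] by (rule image_subsetI)
    show "Wset n \<subseteq> (\<lambda>p. eta (itin n p)) ` Tset n"
    proof
      fix W assume "W \<in> Wset n"
      then obtain p where "p \<in> Tset n" "eta (itin n p) = W" using surjW[OF assms] by blast
      then show "W \<in> (\<lambda>p. eta (itin n p)) ` Tset n" by (rule rev_image_eqI[OF _ sym])
    qed
  qed
qed

end
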